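(* Let $n\ge3$ be an integer, $k=n$, and let $X$ be the discrete-time Markov chain on $\mathbb{N}^{n-1}$ described in the context. Then $X$ is unstable (not ergodic).
   Context: $\mathbb{N}=\{0,1,2,\dots\}$. $\mathbf{0}$, $\mathbf{1}$ are the all-zero and all-one vectors of dimension $n-1$, $\mathbf{e}_l$ the $l$-th unit vector. For $j=0,\dots,n-1$, $R_j$ is the set of $\mathbf{x}\in\mathbb{N}^{n-1}$ with exactly $j$ zero entries. $X$ is the Markov chain on $\mathbb{N}^{n-1}$ with nonzero transition probabilities: from $\mathbf{x}\in R_0$, to $\mathbf{x}-\mathbf{1}$ w.p. $\frac{k-(n-1)}{k}$ and to $\mathbf{x}+\mathbf{e}_l$ w.p. $\frac1k$ ($l=1,\dots,n-1$); from $\mathbf{x}\in R_j$, $1\le j\le n-2$, to $\mathbf{x}+\mathbf{e}_l$ w.p. $\frac{k-(n-1-j)}{kj}$ if $x_l=0$ and w.p. $\frac1k$ if $x_l\ge1$; from $\mathbf{0}$ to $\mathbf{e}_l$ w.p. $\frac1{n-1}$. *)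

theory Defs
  imports "HOL-Analysis.Analysis"
begin

text \<open>States: vectors in N^(n-1), represented as functions nat => nat whose entries
  at indices l >= n-1 are zero (coordinates are indexed 0,...,n-2).\<close>

definition states :: "nat \<Rightarrow> (nat \<Rightarrow> nat) set" where
  "states n = {x. \<forall>i\<ge>n - 1. x i = 0}"

text \<open>Number of zero entries of x among the n-1 coordinates (x is in R_j iff this is j).\<close>
definition num_zeros :: "nat \<Rightarrow> (nat \<Rightarrow> nat) \<Rightarrow> nat" where
  "num_zeros n x = card {l. l < n - 1 \<and> x l = 0}"

definition dec_all :: "nat \<Rightarrow> (nat \<Rightarrow> nat) \<Rightarrow> (nat \<Rightarrow> nat)" where
  "dec_all n x = (\<lambda>i. if i < n - 1 then x i - 1 else 0)"

definition inc :: "(nat \<Rightarrow> nat) \<Rightarrow> nat \<Rightarrow> (nat \<Rightarrow> nat)" where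
  "inc x l = x(l := Suc (x l))"

definition inc_prob :: "nat \<Rightarrow> nat \<Rightarrow> (nat \<Rightarrow> nat) \<Rightarrow> nat \<Rightarrow> real" where
  "inc_prob n k x l =
     (let m = n - 1; j = num_zeros n x in
      if j = 0 then 1 / real k
      else if j = m then 1 / real m
      else if x l = 0 then (real k - (real m - real j)) / (real k * real j)
      else 1 / real k)"

definition trans_prob :: "nat \<Rightarrow> nat \<Rightarrow> (nat \<Rightarrow> nat) \<Rightarrow> (nat \<Rightarrow> nat) \<Rightarrow> real" where
  "trans_prob n k x y =
     (if num_zeros n x = 0 \<and> y = dec_all n x then (real k - real (n - 1)) / real k else 0)
     + (\<Sum>l<n - 1. if y = inc x l then inc_prob n k x l else 0)"

text \<open>first_hit P z t w: probability, starting from w, that the first visit to z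
  (at times >= 0) happens at time t.\<close>
fun first_hit :: "(('s \<Rightarrow> 's \<Rightarrow> real)) \<Rightarrow> 's \<Rightarrow> nat \<Rightarrow> 's \<Rightarrow> real" where
  "first_hit P z 0 w = (if w = z then 1 else 0)"
| "first_hit P z (Suc t) w =
     (if w = z then 0 else (\<Sum>\<^sub>\<infinity> v. P w v * first_hit P z t v))"

definition return_prob :: "('s \<Rightarrow> 's \<Rightarrow> real) \<Rightarrow> 's \<Rightarrow> nat \<Rightarrow> real" where
  "return_prob P z t = (if t = 0 then 0 else (\<Sum>\<^sub>\<infinity> v. P z v * first_hit P z (t - 1) v))"

definition positive_recurrent :: "('s \<Rightarrow> 's \<Rightarrow> real) \<Rightarrow> 's \<Rightarrow> bool" where
  "positive_recurrent P z \<longleftrightarrow>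
     (\<Sum>t. return_prob P z t) = 1 \<and> summable (\<lambda>t. real t * return_prob P z t)"

end

theory Submission
  imports Defs
begin

lemma has_sum_finsum:
  fixes f :: "'i \<Rightarrow> 'a \<Rightarrow> real"
  assumes "finite A" and "\<And>i. i \<in> A \<Longrightarrow> (f i has_sum s i) UNIV"
  shows "((\<lambda>v. \<Sum>i\<in>A. f i v) has_sum (\<Sum>i\<in>A. s i)) UNIV"
  using assms
proof (induction A rule: finite_induct)
  case empty
  then show ?case by (simp add: has_sum_0)
next
  case (insert x F)
  then show ?case by (simp add: has_sum_add)
qed

lemma has_sum_point:
  fixes c :: real
  shows "((\<lambda>v. if v = a then c else 0) has_sum c) UNIV"
proof -
  have "((\<lambda>v. if v = a then c else 0) has_sum (\<Sum>v\<in>{a}. if v = a then c else 0)) {a}"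
    by (rule has_sum_finite) simp
  then have "((\<lambda>v. if v = a then c else 0) has_sum c) {a}" by simp
  then show ?thesis
    by (subst has_sum_cong_neutral[where T="{a}"]) auto
qed

definition Ex :: "nat \<Rightarrow> (nat \<Rightarrow> nat) \<Rightarrow> ((nat \<Rightarrow> nat) \<Rightarrow> real) \<Rightarrow> real" where
  "Ex n w F = (if num_zeros n w = 0 then (real n - real (n - 1)) / real n * F (dec_all n w) else 0)
     + (\<Sum>l<n - 1. inc_prob n n w l * F (inc w l))"

lemma Ex_infsum: "(\<Sum>\<^sub>\<infinity> v. trans_prob n n w v * F v) = Ex n w F"
proof -
  have eq: "(\<lambda>v. trans_prob n n w v * F v) = (\<lambda>v. (if v = dec_all n w then
      (if num_zeros n w = 0 then (real n - real (n - 1)) / real n * F (dec_all n w) else 0) else 0)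
      + (\<Sum>l<n - 1. if v = inc w l then inc_prob n n w l * F (inc w l) else 0))"
    by (auto simp: trans_prob_def algebra_simps sum_distrib_left intro!: sum.cong ext)
  show ?thesis unfolding eq Ex_def
    by (intro infsumI has_sum_add has_sum_finsum has_sum_point) auto
qed

lemma coef_one: "n \<ge> 1 \<Longrightarrow> real n - real (n - 1) = 1"
  by (simp add: of_nat_diff)

lemma num_zeros_le: "num_zeros n w \<le> n - 1"
proof -
  have "{l. l < n - 1 \<and> w l = 0} \<subseteq> {..<n-1}" by auto
  then show ?thesis unfolding num_zeros_def by (metis card_lessThan card_mono finite_lessThan)
qed

lemma sum_if_zero:
  "(\<Sum>l<n - 1. if w l = 0 then a else (b::real)) = real (num_zeros n w) * a + (real (n - 1) - real (num_zeros n w)) * b"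
proof -
  have fin: "finite {..<n-1}" by simp
  have Z: "{..<n-1} \<inter> {l. w l = 0} = {l. l < n - 1 \<and> w l = 0}" by auto
  have c1: "card ({..<n-1} \<inter> {l. w l = 0}) = num_zeros n w" unfolding num_zeros_def Z ..
  have c2: "card ({..<n-1} \<inter> - {l. w l = 0}) = n - 1 - num_zeros n w"
  proof -
    have "{..<n-1} \<inter> - {l. w l = 0} = {..<n-1} - {l. l < n - 1 \<and> w l = 0}" by auto
    moreover have "card ({..<n-1} - {l. l < n - 1 \<and> w l = 0}) = card {..<n-1} - card {l. l < n - 1 \<and> w l = 0}"
      by (rule card_Diff_subset) auto
    ultimately show ?thesis unfolding num_zeros_def by simp
  qed
  have "(\<Sum>l<n - 1. if w l = 0 then a else (b::real)) = (\<Sum>l\<in>{..<n-1} \<inter> {l. w l = 0}. a) + (\<Sum>l\<in>{..<n-1} \<inter> - {l. w l = 0}. b)"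
    using sum.If_cases[OF fin, of "\<lambda>l. w l = 0" "\<lambda>_. a" "\<lambda>_. b"] by (simp only:)
  also have "\<dots> = real (num_zeros n w) * a + real (n - 1 - num_zeros n w) * b"
    by (simp only: sum_constant c1 c2 of_nat_mult)
  moreover have "real (n - 1 - num_zeros n w) = real (n - 1) - real (num_zeros n w)" using num_zeros_le[of n w] by (simp only: of_nat_diff)
  ultimately show ?thesis by simp
qed

lemma mass_inc:
  assumes "n \<ge> 3"
  shows "(\<Sum>l<n - 1. inc_prob n n w l) = 1 - (if num_zeros n w = 0 then 1 / real n else 0)"
proof -
  define j where "j = num_zeros n w"
  have jle: "j \<le> n - 1" unfolding j_def by (rule num_zeros_le)
  show ?thesis
  proof (cases "j = 0")
    case True
    then show ?thesis using assms unfolding inc_prob_def Let_def j_def[symmetric]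
      by (simp add: of_nat_diff field_simps)
  next
    case False
    show ?thesis
    proof (cases "j = n - 1")
      case True
      then show ?thesis using assms False unfolding inc_prob_def Let_def j_def[symmetric]
        by (simp add: of_nat_diff field_simps)
    next
      case F2: False
      have "(\<Sum>l<n - 1. inc_prob n n w l) = (\<Sum>l<n - 1. if w l = 0 then (real n - (real (n - 1) - real j)) / (real n * real j) else 1 / real n)"
        using False F2 unfolding inc_prob_def Let_def j_def[symmetric] by simp
      also have "\<dots> = 1" unfolding sum_if_zero j_def[symmetric]
        using False assms jle by (simp add: of_nat_diff field_simps)
      finally show ?thesis using False j_def by simp
    qed
  qed
qed

lemma inc_prob_nonneg:
  assumes "n \<ge> 3"
  shows "inc_prob n n w l \<ge> 0"
proof -
  have "num_zeros n w \<le> n - 1" by (rule num_zeros_le)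
  then have "real n - (real (n - 1) - real (num_zeros n w)) \<ge> 0" using assms by (simp add: of_nat_diff)
  then show ?thesis unfolding inc_prob_def Let_def by auto
qed


lemma Ex_const: "n \<ge> 3 \<Longrightarrow> Ex n w (\<lambda>_. c) = c"
proof -
  assume n: "n \<ge> 3"
  have "Ex n w (\<lambda>_. c) = (if num_zeros n w = 0 then 1 / real n * c else 0) + (\<Sum>l<n - 1. inc_prob n n w l) * c"
    using n unfolding Ex_def by (simp add: coef_one sum_distrib_right)
  also have "\<dots> = c" unfolding mass_inc[OF n] by (simp add: algebra_simps)
  finally show ?thesis .
qed

lemma Ex_add: "Ex n w (\<lambda>v. F v + G v) = Ex n w F + Ex n w G"
  unfolding Ex_def by (simp add: distrib_left sum.distrib)

lemma Ex_diff: "Ex n w (\<lambda>v. F v - G v) = Ex n w F - Ex n w G"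
  unfolding Ex_def by (simp add: right_diff_distrib sum_subtractf)

lemma Ex_cmult: "Ex n w (\<lambda>v. a * F v) = a * Ex n w F"
  unfolding Ex_def by (simp add: mult.left_commute distrib_left sum_distrib_left)

lemma Ex_sum: "finite A \<Longrightarrow> Ex n w (\<lambda>v. \<Sum>s\<in>A. f s v) = (\<Sum>s\<in>A. Ex n w (f s))"
proof (induction A rule: finite_induct)
  case empty
  then show ?case by (simp add: Ex_def)
next
  case (insert x F)
  then show ?case by (simp add: Ex_add)
qed

lemma Ex_mono:
  assumes n: "n \<ge> 3"
    and d: "num_zeros n w = 0 \<Longrightarrow> F (dec_all n w) \<le> G (dec_all n w)"
    and i: "\<And>l. l < n - 1 \<Longrightarrow> F (inc w l) \<le> G (inc w l)"
  shows "Ex n w F \<le> Ex n w G"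
proof -
  have "(\<Sum>l<n - 1. inc_prob n n w l * F (inc w l)) \<le> (\<Sum>l<n - 1. inc_prob n n w l * G (inc w l))"
    by (intro sum_mono mult_left_mono i inc_prob_nonneg[OF n]) auto
  moreover have "(if num_zeros n w = 0 then (real n - real (n - 1)) / real n * F (dec_all n w) else 0)
     \<le> (if num_zeros n w = 0 then (real n - real (n - 1)) / real n * G (dec_all n w) else 0)"
    using d n by (auto simp: coef_one divide_right_mono)
  ultimately show ?thesis unfolding Ex_def by linarith
qed

lemma dec_states: "dec_all n w \<in> states n"
  unfolding states_def dec_all_def by auto

lemma inc_states: "w \<in> states n \<Longrightarrow> l < n - 1 \<Longrightarrow> inc w l \<in> states n"
  unfolding states_def inc_def by auto

definition Ssum :: "nat \<Rightarrow> (nat \<Rightarrow> nat) \<Rightarrow> real" where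
  "Ssum n w = real (\<Sum>l<n-1. w l)"

lemma Ssum_nonneg: "Ssum n w \<ge> 0"
  unfolding Ssum_def by (simp only: of_nat_0_le_iff)

lemma Ssum_inc: "l < n - 1 \<Longrightarrow> Ssum n (inc w l) = Ssum n w + 1"
proof -
  assume l: "l < n - 1"
  have "(\<Sum>i<n-1. inc w l i) = (\<Sum>i<n-1. w i + (if i = l then 1 else 0))"
    unfolding inc_def by (intro sum.cong) auto
  also have "\<dots> = (\<Sum>i<n-1. w i) + 1" using l by (simp add: sum.distrib)
  finally show ?thesis unfolding Ssum_def by simp
qed

lemma Ssum_dec_le: "Ssum n (dec_all n w) \<le> Ssum n w"
  unfolding Ssum_def dec_all_def by (simp add: sum_mono)

lemma nz0: "num_zeros n w = 0 \<Longrightarrow> l < n - 1 \<Longrightarrow> w l \<ge> 1"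
proof -
  assume a: "num_zeros n w = 0" "l < n - 1"
  have "finite {l. l < n - 1 \<and> w l = 0}" by simp
  then have "{l. l < n - 1 \<and> w l = 0} = {}" using a(1) unfolding num_zeros_def by simp
  then show ?thesis using a(2) by auto
qed

lemma Ssum_dec: "num_zeros n w = 0 \<Longrightarrow> Ssum n (dec_all n w) = Ssum n w - real (n - 1)"
proof -
  assume a: "num_zeros n w = 0"
  have "real (\<Sum>i<n-1. dec_all n w i) = (\<Sum>i<n-1. real (w i) - 1)"
    unfolding dec_all_def of_nat_sum by (intro sum.cong refl) (use nz0[OF a] in \<open>auto simp: of_nat_diff\<close>)
  also have "\<dots> = real (\<Sum>i<n-1. w i) - real (n - 1)" by (simp add: sum_subtractf)
  finally show ?thesis unfolding Ssum_def .
qed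

lemma Ex_Ssum:
  assumes n: "n \<ge> 3"
  shows "Ex n w (Ssum n) = Ssum n w + (if num_zeros n w = 0 then 0 else 1)"
proof -
  have "(\<Sum>l<n - 1. inc_prob n n w l * Ssum n (inc w l)) = (\<Sum>l<n - 1. inc_prob n n w l) * (Ssum n w + 1)"
    by (simp add: Ssum_inc sum_distrib_right)
  then have "Ex n w (Ssum n) = (if num_zeros n w = 0 then 1 / real n * Ssum n (dec_all n w) else 0)
      + (1 - (if num_zeros n w = 0 then 1 / real n else 0)) * (Ssum n w + 1)"
    unfolding Ex_def mass_inc[OF n, symmetric] using n by (simp add: coef_one)
  then show ?thesis using n by (auto simp: Ssum_dec of_nat_diff field_simps)
qed


fun hh :: "nat \<Rightarrow> (nat \<Rightarrow> nat) \<Rightarrow> nat \<Rightarrow> (nat \<Rightarrow> nat) \<Rightarrow> real" where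
  "hh n z 0 w = (if w = z then 1 else 0)"
| "hh n z (Suc t) w = (if w = z then 1 else Ex n w (hh n z t))"

fun gg :: "nat \<Rightarrow> (nat \<Rightarrow> nat) \<Rightarrow> nat \<Rightarrow> (nat \<Rightarrow> nat) \<Rightarrow> real" where
  "gg n z 0 w = Ssum n w"
| "gg n z (Suc t) w = (if w = z then Ssum n z else Ex n w (gg n z t))"

lemma fh_Suc: "w \<noteq> z \<Longrightarrow> first_hit (trans_prob n n) z (Suc t) w = Ex n w (first_hit (trans_prob n n) z t)"
  by (simp add: Ex_infsum)

lemma hh_eq: "hh n z t w = (\<Sum>s\<le>t. first_hit (trans_prob n n) z s w)"
proof (induction t arbitrary: w)
  case 0
  then show ?case by simp
next
  case (Suc t)
  have sh: "(\<Sum>s\<le>Suc t. first_hit (trans_prob n n) z s w) =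
     first_hit (trans_prob n n) z 0 w + (\<Sum>s\<le>t. first_hit (trans_prob n n) z (Suc s) w)"
    by (rule sum.atMost_Suc_shift)
  show ?case
  proof (cases "w = z")
    case True
    then show ?thesis unfolding sh by simp
  next
    case False
    have "(\<Sum>s\<le>t. first_hit (trans_prob n n) z (Suc s) w) = (\<Sum>s\<le>t. Ex n w (first_hit (trans_prob n n) z s))"
      using False by (simp add: Ex_infsum)
    also have "\<dots> = Ex n w (\<lambda>v. \<Sum>s\<le>t. first_hit (trans_prob n n) z s v)"
      by (simp add: Ex_sum)
    also have "(\<lambda>v. \<Sum>s\<le>t. first_hit (trans_prob n n) z s v) = hh n z t"
      using Suc.IH by auto
    finally show ?thesis unfolding sh using False by simp
  qed
qed

lemma hh_bounds:
  assumes n: "n \<ge> 3"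
  shows "w \<in> states n \<Longrightarrow> 0 \<le> hh n z t w \<and> hh n z t w \<le> 1"
proof (induction t arbitrary: w)
  case 0
  then show ?case by simp
next
  case (Suc t)
  show ?case
  proof (cases "w = z")
    case True
    then show ?thesis by simp
  next
    case False
    have "Ex n w (\<lambda>_. 0) \<le> Ex n w (hh n z t)"
      by (rule Ex_mono[OF n]) (use Suc.IH dec_states inc_states Suc.prems in auto)
    moreover have "Ex n w (hh n z t) \<le> Ex n w (\<lambda>_. 1)"
      by (rule Ex_mono[OF n]) (use Suc.IH dec_states inc_states Suc.prems in auto)
    ultimately show ?thesis using False by (simp add: Ex_const[OF n])
  qed
qed

lemma fh_nonneg:
  assumes n: "n \<ge> 3"
  shows "w \<in> states n \<Longrightarrow> 0 \<le> first_hit (trans_prob n n) z t w"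
proof (induction t arbitrary: w)
  case 0
  then show ?case by simp
next
  case (Suc t)
  show ?case
  proof (cases "w = z")
    case True
    then show ?thesis by simp
  next
    case False
    have "Ex n w (\<lambda>_. 0) \<le> Ex n w (first_hit (trans_prob n n) z t)"
      by (rule Ex_mono[OF n]) (use Suc.IH dec_states inc_states Suc.prems in auto)
    then show ?thesis using False by (simp add: Ex_const[OF n] Ex_infsum)
  qed
qed

lemma gg_mono:
  assumes n: "n \<ge> 3"
  shows "w \<in> states n \<Longrightarrow> gg n z t w \<le> gg n z (Suc t) w"
proof (induction t arbitrary: w)
  case 0
  have "gg n z 0 = Ssum n" by (rule ext) simp
  then show ?case using Ex_Ssum[OF n, of w] by simp
next
  case (Suc t)
  show ?case
  proof (cases "w = z")
    case True
    then show ?thesis by simp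
  next
    case False
    have "Ex n w (gg n z t) \<le> Ex n w (gg n z (Suc t))"
      by (rule Ex_mono[OF n]) (use Suc.IH dec_states inc_states Suc.prems in auto)
    then show ?thesis using False by simp
  qed
qed

lemma Ex_ge_dec:
  assumes n: "n \<ge> 3" and nz: "num_zeros n w = 0" and i: "\<And>l. l < n - 1 \<Longrightarrow> F (inc w l) \<ge> 0"
  shows "Ex n w F \<ge> F (dec_all n w) / real n"
proof -
  have "(\<Sum>l<n - 1. inc_prob n n w l * F (inc w l)) \<ge> 0"
    by (intro sum_nonneg mult_nonneg_nonneg inc_prob_nonneg[OF n] i) auto
  then show ?thesis unfolding Ex_def using nz n by (simp add: coef_one)
qed


lemma nz_pos: "l < n - 1 \<Longrightarrow> w l = 0 \<Longrightarrow> num_zeros n w \<noteq> 0"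
proof -
  assume a: "l < n - 1" "w l = 0"
  have "l \<in> {l. l < n - 1 \<and> w l = 0}" using a by simp
  moreover have "finite {l. l < n - 1 \<and> w l = 0}" by simp
  ultimately show ?thesis unfolding num_zeros_def by (metis card_0_eq empty_iff)
qed

lemma nz_zero: "(\<And>l. l < n - 1 \<Longrightarrow> w l \<ge> 1) \<Longrightarrow> num_zeros n w = 0"
proof -
  assume a: "\<And>l. l < n - 1 \<Longrightarrow> w l \<ge> 1"
  have "{l. l < n - 1 \<and> w l = 0} = {}" using a by fastforce
  then show ?thesis unfolding num_zeros_def by simp
qed

lemma gg_pos:
  assumes n: "n \<ge> 3"
  shows "w \<in> states n \<Longrightarrow> Ssum n w < Ssum n z \<Longrightarrow> (\<forall>l<n-1. j \<le> w l) \<Longrightarrow> (\<exists>l<n-1. w l = j)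
    \<Longrightarrow> gg n z j w + (1 / real n) ^ j \<le> gg n z (Suc j) w"
proof (induction j arbitrary: w)
  case 0
  then have wz: "w \<noteq> z" by auto
  from 0 obtain l where "l < n - 1" "w l = 0" by auto
  then have "num_zeros n w \<noteq> 0" by (rule nz_pos)
  have "gg n z 0 = Ssum n" by (rule ext) simp
  then show ?case using Ex_Ssum[OF n, of w] wz \<open>num_zeros n w \<noteq> 0\<close> by simp
next
  case (Suc j)
  then have wz: "w \<noteq> z" by auto
  have nz: "num_zeros n w = 0" by (rule nz_zero) (use Suc.prems in auto)
  define D where "D = (\<lambda>v. gg n z (Suc j) v - gg n z j v)"
  have dst: "dec_all n w \<in> states n" by (rule dec_states)
  have dS: "Ssum n (dec_all n w) < Ssum n z"
    using Ssum_dec[OF nz] Suc.prems(2) n by simp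
  have dge: "\<forall>l<n-1. j \<le> dec_all n w l" using Suc.prems(3) unfolding dec_all_def by auto
  have dex: "\<exists>l<n-1. dec_all n w l = j" using Suc.prems(4) unfolding dec_all_def by (metis diff_Suc_1)
  have Ddec: "D (dec_all n w) \<ge> (1 / real n) ^ j"
    using Suc.IH[OF dst dS dge dex] unfolding D_def by simp
  have Dinc: "D (inc w l) \<ge> 0" if "l < n - 1" for l
    using gg_mono[OF n inc_states[OF Suc.prems(1) that]] unfolding D_def by simp
  have "Ex n w D \<ge> D (dec_all n w) / real n"
    by (rule Ex_ge_dec[OF n nz, of D]) (rule Dinc)
  moreover have "D (dec_all n w) / real n \<ge> (1 / real n) ^ j / real n"
    using Ddec n by (simp add: divide_right_mono)
  moreover have "Ex n w D = gg n z (Suc (Suc j)) w - gg n z (Suc j) w"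
    unfolding D_def Ex_diff gg.simps(2)[of n z "Suc j" w] gg.simps(2)[of n z j w] if_not_P[OF wz] by (rule refl)
  ultimately show ?case by (simp add: field_simps)
qed

lemma step_calc:
  assumes n: "n \<ge> 3" and w: "w \<in> states n"
    and up: "\<And>v. v \<in> states n \<Longrightarrow> gg n z t v \<le> Ssum n z * hh n z t v + (Ssum n v + real t) * (1 - hh n z t v)"
  shows "Ex n w (gg n z t) \<le> Ssum n z * Ex n w (hh n z t) + (Ssum n w + 1 + real t) * (1 - Ex n w (hh n z t))"
proof -
  have succ: "gg n z t v \<le> Ssum n z * hh n z t v + (Ssum n w + 1 + real t) * (1 - hh n z t v)"
    if vs: "v \<in> states n" and vS: "Ssum n v \<le> Ssum n w + 1" for v
  proof -
    have "1 - hh n z t v \<ge> 0" using hh_bounds[OF n vs] by simp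
    then have "(Ssum n v + real t) * (1 - hh n z t v) \<le> (Ssum n w + 1 + real t) * (1 - hh n z t v)"
      using vS by (intro mult_right_mono) auto
    then show ?thesis using up[OF vs] by linarith
  qed
  have "Ex n w (gg n z t) \<le> Ex n w (\<lambda>v. Ssum n z * hh n z t v + (Ssum n w + 1 + real t) * (1 - hh n z t v))"
  proof (rule Ex_mono[OF n])
    show "gg n z t (dec_all n w) \<le> Ssum n z * hh n z t (dec_all n w) + (Ssum n w + 1 + real t) * (1 - hh n z t (dec_all n w))"
      by (rule succ[OF dec_states]) (use Ssum_dec_le[of n w] in linarith)
    show "gg n z t (inc w l) \<le> Ssum n z * hh n z t (inc w l) + (Ssum n w + 1 + real t) * (1 - hh n z t (inc w l))"
      if "l < n - 1" for l
      by (rule succ[OF inc_states[OF w that]]) (use Ssum_inc[OF that, of w] in linarith)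
  qed
  also have "\<dots> = Ssum n z * Ex n w (hh n z t) + (Ssum n w + 1 + real t) * (1 - Ex n w (hh n z t))"
    by (simp only: Ex_add Ex_cmult Ex_diff Ex_const[OF n])
  finally show ?thesis .
qed

lemma gg_upper:
  assumes n: "n \<ge> 3"
  shows "w \<in> states n \<Longrightarrow> gg n z t w \<le> Ssum n z * hh n z t w + (Ssum n w + real t) * (1 - hh n z t w)"
proof (induction t arbitrary: w)
  case 0
  then show ?case by simp
next
  case (Suc t)
  show ?case
  proof (cases "w = z")
    case True
    then show ?thesis by simp
  next
    case False
    have "Ex n w (gg n z t) \<le> Ssum n z * Ex n w (hh n z t) + (Ssum n w + 1 + real t) * (1 - Ex n w (hh n z t))"
      by (rule step_calc[OF n Suc.prems Suc.IH])
    then show ?thesis using False by (simp add: algebra_simps)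
  qed
qed


lemma G_mono:
  assumes n: "n \<ge> 3" and z: "z \<in> states n"
  shows "Ex n z (gg n z T) \<le> Ex n z (gg n z (Suc T))"
  by (rule Ex_mono[OF n]) (use gg_mono[OF n] dec_states inc_states[OF z] in auto)

lemma G_lower:
  assumes n: "n \<ge> 3" and z: "z \<in> states n"
  shows "\<exists>T0 c. c > 0 \<and> (\<forall>T\<ge>T0. Ssum n z + c \<le> Ex n z (gg n z T))"
proof -
  have g0: "gg n z 0 = Ssum n" by (rule ext) simp
  have G0: "Ex n z (gg n z 0) = Ssum n z + (if num_zeros n z = 0 then 0 else 1)"
    unfolding g0 by (rule Ex_Ssum[OF n])
  have Gm: "Ex n z (gg n z a) \<le> Ex n z (gg n z b)" if "a \<le> b" for a b
    using lift_Suc_mono_le[of "\<lambda>T. Ex n z (gg n z T)", OF G_mono[OF n z] that] .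
  show ?thesis
  proof (cases "num_zeros n z = 0")
    case False
    then show ?thesis using G0 Gm[of 0] by (intro exI[of _ 0] exI[of _ 1]) force
  next
    case True
    define d where "d = Min (z ` {..<n-1})"
    have ne: "z ` {..<n-1} \<noteq> {}" using n by (simp add: lessThan_empty_iff)
    have dle: "d \<le> z l" if "l < n - 1" for l unfolding d_def using that by simp
    have "d \<in> z ` {..<n-1}" unfolding d_def using ne by (intro Min_in) auto
    then obtain l0 where l0: "l0 < n - 1" "z l0 = d" by auto
    have "d \<ge> 1" using nz0[OF True l0(1)] l0(2) by simp
    then obtain j where j: "d = Suc j" by (cases d) auto
    have dst: "dec_all n z \<in> states n" by (rule dec_states)
    have dS: "Ssum n (dec_all n z) < Ssum n z"
      using Ssum_dec[OF True] n by simp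
    have dge: "\<forall>l<n-1. j \<le> dec_all n z l" using dle j unfolding dec_all_def by fastforce
    have dex: "\<exists>l<n-1. dec_all n z l = j" using l0 j unfolding dec_all_def by (metis diff_Suc_1)
    define D where "D = (\<lambda>v. gg n z (Suc j) v - gg n z j v)"
    have Ddec: "D (dec_all n z) \<ge> (1 / real n) ^ j"
      using gg_pos[OF n dst dS dge dex] unfolding D_def by simp
    have Dinc: "D (inc z l) \<ge> 0" if "l < n - 1" for l
      using gg_mono[OF n inc_states[OF z that]] unfolding D_def by simp
    have "Ex n z D \<ge> D (dec_all n z) / real n"
      by (rule Ex_ge_dec[OF n True, of D]) (rule Dinc)
    moreover have "D (dec_all n z) / real n \<ge> (1 / real n) ^ j / real n"
      using Ddec n by (simp add: divide_right_mono)
    moreover have "Ex n z D = Ex n z (gg n z (Suc j)) - Ex n z (gg n z j)"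
      unfolding D_def Ex_diff by (rule refl)
    moreover have "Ex n z (gg n z j) \<ge> Ssum n z" using Gm[of 0 j] G0 True by simp
    ultimately have key: "Ex n z (gg n z (Suc j)) \<ge> Ssum n z + (1 / real n) ^ j / real n" by linarith
    show ?thesis
    proof (intro exI[of _ "Suc j"] exI[of _ "(1 / real n) ^ j / real n"] conjI allI impI)
      show "0 < (1 / real n) ^ j / real n" using n by simp
      fix T assume "Suc j \<le> T"
      then show "Ssum n z + (1 / real n) ^ j / real n \<le> Ex n z (gg n z T)"
        using key Gm[of "Suc j" T] by linarith
    qed
  qed
qed


theorem proposition7p5:
  fixes n :: nat
  assumes "n \<ge> 3"
  shows "\<forall>x\<in>states n. \<not> positive_recurrent (trans_prob n n) x"
proof (intro ballI notI)
  have n: "n \<ge> 3" by (rule assms)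
  fix z assume z: "z \<in> states n" and pr: "positive_recurrent (trans_prob n n) z"
  define r where "r = return_prob (trans_prob n n) z"
  have r1: "(\<Sum>t. r t) = 1" and sm: "summable (\<lambda>t. real t * r t)"
    using pr unfolding positive_recurrent_def r_def by auto
  have r0: "r 0 = 0" unfolding r_def return_prob_def by simp
  have rS: "r (Suc s) = Ex n z (first_hit (trans_prob n n) z s)" for s
    unfolding r_def return_prob_def by (simp add: Ex_infsum)
  have rnn: "r t \<ge> 0" for t
  proof (cases t)
    case 0
    then show ?thesis using r0 by simp
  next
    case (Suc s)
    have "Ex n z (\<lambda>_. 0) \<le> Ex n z (first_hit (trans_prob n n) z s)"
      by (rule Ex_mono[OF n]) (use fh_nonneg[OF n] dec_states inc_states[OF z] in auto)
    then show ?thesis using Suc rS by (simp add: Ex_const[OF n])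
  qed
  have rsum: "summable r"
  proof (rule summable_comparison_test[OF _ sm])
    show "\<exists>N. \<forall>t\<ge>N. norm (r t) \<le> real t * r t"
    proof (intro exI[of _ 1] allI impI)
      fix t :: nat assume "1 \<le> t"
      then show "norm (r t) \<le> real t * r t" using rnn[of t]
        by (simp add: mult_le_cancel_right1)
    qed
  qed
  define H where "H T = Ex n z (hh n z T)" for T
  have Hsum: "H T = (\<Sum>t<Suc (Suc T). r t)" for T
  proof -
    have "hh n z T = (\<lambda>v. \<Sum>s\<le>T. first_hit (trans_prob n n) z s v)"
      by (rule ext) (rule hh_eq)
    then have "H T = (\<Sum>s\<le>T. r (Suc s))" unfolding H_def rS by (simp add: Ex_sum)
    also have "\<dots> = (\<Sum>s<Suc T. r (Suc s))" by (simp add: lessThan_Suc_atMost)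
    also have "\<dots> = (\<Sum>t<Suc (Suc T). r t)" by (simp only: sum.lessThan_Suc_shift r0 add_0)
    finally show ?thesis .
  qed
  define tl where "tl N = (\<Sum>i. r (i + N))" for N
  have tl_eq: "1 - H T = tl (Suc (Suc T))" for T
    using suminf_split_initial_segment[OF rsum, of "Suc (Suc T)"] r1 Hsum[of T] unfolding tl_def by simp
  have tl_nn: "tl N \<ge> 0" for N
    unfolding tl_def by (intro suminf_nonneg) (use rsum summable_ignore_initial_segment rnn in auto)
  have tl_bound: "real N * tl N \<le> (\<Sum>i. real (i + N) * r (i + N))" for N
  proof -
    have s1: "summable (\<lambda>i. r (i + N))" using summable_ignore_initial_segment[OF rsum] .
    have s2: "summable (\<lambda>i. real (i + N) * r (i + N))" using summable_ignore_initial_segment[OF sm] .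
    have "real N * tl N = (\<Sum>i. real N * r (i + N))" unfolding tl_def using suminf_mult[OF s1] by simp
    also have "\<dots> \<le> (\<Sum>i. real (i + N) * r (i + N))"
      by (intro suminf_le summable_mult s1 s2 mult_right_mono rnn) auto
    finally show ?thesis .
  qed
  define Sz where "Sz = Ssum n z"
  have Sz0: "Sz \<ge> 0" unfolding Sz_def by (rule Ssum_nonneg)
  have Gup: "Ex n z (gg n z T) \<le> Sz * H T + (Sz + 1 + real T) * (1 - H T)" for T
    unfolding H_def Sz_def by (rule step_calc[OF n z gg_upper[OF n]])
  obtain T0 c where c: "c > 0" and T0: "\<And>T. T \<ge> T0 \<Longrightarrow> Sz + c \<le> Ex n z (gg n z T)"
    using G_lower[OF n z] unfolding Sz_def by blast
  have "c / (Sz + 1) > 0" using c Sz0 by simp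
  from suminf_exist_split[OF this sm] obtain N where
    N: "\<And>m. m \<ge> N \<Longrightarrow> norm (\<Sum>i. real (i + m) * r (i + m)) < c / (Sz + 1)" by auto
  define T where "T = max T0 N"
  define M where "M = Suc (Suc T)"
  have lowT: "Sz + c \<le> Ex n z (gg n z T)" using T0 unfolding T_def by simp
  have tailM: "(\<Sum>i. real (i + M) * r (i + M)) < c / (Sz + 1)"
  proof -
    have "M \<ge> N" unfolding M_def T_def by simp
    from N[OF this] show ?thesis unfolding real_norm_def by linarith
  qed
  have e1: "1 - H T = tl M" unfolding M_def by (rule tl_eq)
  have e2: "real M * tl M < c / (Sz + 1)" using tl_bound[of M] tailM by linarith
  have e3: "(Sz + 1) * (real M * tl M) < c" using e2 Sz0 by (simp add: field_simps)
  have e4: "(Sz + 1 + real T) * tl M \<le> (Sz + 1) * (real M * tl M)"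
  proof -
    have "Sz + 1 + real T \<le> (Sz + 1) * real M" using Sz0 unfolding M_def by (simp add: algebra_simps)
    then show ?thesis using tl_nn[of M] by (simp add: mult_right_mono mult.assoc[symmetric])
  qed
  have e5: "Sz * H T \<le> Sz" using e1 tl_nn[of M] Sz0 by (simp add: mult_left_le)
  have "Ex n z (gg n z T) \<le> Sz * H T + (Sz + 1 + real T) * tl M" using Gup[of T] e1 by simp
  then show False using lowT e3 e4 e5 by linarith
qed

end
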